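(* Let $G$ be a graph without isolated vertices, $S$ a DDS of $G$, and $u\in\widehat S$ with $P_S(u)\neq\emptyset$. Let $v_u\in P_S(u)$, and let $P'=\{v\in P_S(u): o_S(v)\le o_S(v_u)\}$. Then: (1) $S^1$ is a dominating sequence of $G$; (2) $S_{u\to v_u}$ is a DDS of $G$ and $\widehat{S_{u\to v_u}}=\widehat S$; (3) if $S$ is a GDDS of $G$, then so is $S_{u\to v_u}$; (4) $P'\cup(\widehat{S^1}\setminus\{u\})\subseteq\widehat{(S_{u\to v_u})^1}$.
   Context: Graphs are finite, simple, undirected; $N[v]$ closed neighborhood. A sequence $S=(v_1,\dots,v_k)$ of distinct vertices is a double neighborhood sequence (DNS) if for each $i$ some $w\in N[v_i]$ satisfies $|\{j<i:w\in N[v_j]\}|\le1$; a DDS if moreover its vertex set $D$ satisfies $|N[w]\cap D|\ge2$ for all $w$; a GDDS is a DDS of maximum length. A sequence is legal if $N[v_i]\setminus\bigcup_{j<i}N[v_j]\neq\emptyset$ for all $i\ge2$, and a dominating sequence if moreover its vertex set is a dominating set. $\widehat S$ is the vertex set of $S$, $o_S(v_i)=i$ its position. $N_S^1[v_i]=N[v_i]\setminus\bigcup_{j<i}N[v_j]$, $N_S^2[v_i]=\{w\in N[v_i]:|\{j<i:w\in N[v_j]\}|=1\}$. $S^1$ is the subsequence of $S$ of vertices $v$ with $N_S^1[v]\neq\emptyset$; $S^2$ the subsequence of the remaining ones. For $u\in\widehat{S^1}$, $P_S(u)=\{v\in\widehat{S^2}: N_S^1[u]\cap N_S^2[v]\neq\emptyset\}$.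 For $u,v\in\widehat S$ with $o_S(u)<o_S(v)$, $S_{u\to v}$ is the sequence obtained from $S$ by removing $u$ and reinserting it immediately after $v$. *)

theory Defs
  imports Main
begin

definition graph :: "'a set \<Rightarrow> ('a \<Rightarrow> 'a \<Rightarrow> bool) \<Rightarrow> bool" where
  "graph V E \<longleftrightarrow> finite V \<and> (\<forall>u v. E u v \<longrightarrow> u \<in> V \<and> v \<in> V)
     \<and> (\<forall>u v. E u v \<longrightarrow> E v u) \<and> (\<forall>v. \<not> E v v)"

definition no_isolated :: "'a set \<Rightarrow> ('a \<Rightarrow> 'a \<Rightarrow> bool) \<Rightarrow> bool" where
  "no_isolated V E \<longleftrightarrow> (\<forall>v\<in>V. \<exists>w. E v w)"

definition cnbhd :: "('a \<Rightarrow> 'a \<Rightarrow> bool) \<Rightarrow> 'a \<Rightarrow> 'a set" where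
  "cnbhd E v = insert v {w. E v w}"

text \<open>Sequences are lists; S ! i is v_(i+1) (0-based indices).\<close>
definition is_seq :: "'a set \<Rightarrow> 'a list \<Rightarrow> bool" where
  "is_seq V S \<longleftrightarrow> distinct S \<and> set S \<subseteq> V"

definition dns :: "'a set \<Rightarrow> ('a \<Rightarrow> 'a \<Rightarrow> bool) \<Rightarrow> 'a list \<Rightarrow> bool" where
  "dns V E S \<longleftrightarrow> is_seq V S \<and>
     (\<forall>i < length S. \<exists>w \<in> cnbhd E (S ! i).
        card {j. j < i \<and> w \<in> cnbhd E (S ! j)} \<le> 1)"

definition dds :: "'a set \<Rightarrow> ('a \<Rightarrow> 'a \<Rightarrow> bool) \<Rightarrow> 'a list \<Rightarrow> bool" where
  "dds V E S \<longleftrightarrow> dns V E S \<and> (\<forall>w \<in> V. card (cnbhd E w \<inter> set S) \<ge> 2)"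

definition gdds :: "'a set \<Rightarrow> ('a \<Rightarrow> 'a \<Rightarrow> bool) \<Rightarrow> 'a list \<Rightarrow> bool" where
  "gdds V E S \<longleftrightarrow> dds V E S \<and> (\<forall>S'. dds V E S' \<longrightarrow> length S' \<le> length S)"

definition legal_seq :: "'a set \<Rightarrow> ('a \<Rightarrow> 'a \<Rightarrow> bool) \<Rightarrow> 'a list \<Rightarrow> bool" where
  "legal_seq V E S \<longleftrightarrow> is_seq V S \<and>
     (\<forall>i. 1 \<le> i \<and> i < length S \<longrightarrow>
        cnbhd E (S ! i) - (\<Union>j<i. cnbhd E (S ! j)) \<noteq> {})"

definition dominating_seq :: "'a set \<Rightarrow> ('a \<Rightarrow> 'a \<Rightarrow> bool) \<Rightarrow> 'a list \<Rightarrow> bool" where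
  "dominating_seq V E S \<longleftrightarrow> legal_seq V E S \<and> (\<Union>v\<in>set S. cnbhd E v) = V"

definition before :: "'a list \<Rightarrow> 'a \<Rightarrow> 'a list" where
  "before S v = takeWhile (\<lambda>x. x \<noteq> v) S"

text \<open>Position o_S(v), 1-based.\<close>
definition pos :: "'a list \<Rightarrow> 'a \<Rightarrow> nat" where
  "pos S v = Suc (length (before S v))"

definition N1 :: "('a \<Rightarrow> 'a \<Rightarrow> bool) \<Rightarrow> 'a list \<Rightarrow> 'a \<Rightarrow> 'a set" where
  "N1 E S v = cnbhd E v - (\<Union>x\<in>set (before S v). cnbhd E x)"

definition N2 :: "('a \<Rightarrow> 'a \<Rightarrow> bool) \<Rightarrow> 'a list \<Rightarrow> 'a \<Rightarrow> 'a set" where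
  "N2 E S v = {w \<in> cnbhd E v. card {x \<in> set (before S v). w \<in> cnbhd E x} = 1}"

definition seq1 :: "('a \<Rightarrow> 'a \<Rightarrow> bool) \<Rightarrow> 'a list \<Rightarrow> 'a list" where
  "seq1 E S = filter (\<lambda>v. N1 E S v \<noteq> {}) S"

definition seq2 :: "('a \<Rightarrow> 'a \<Rightarrow> bool) \<Rightarrow> 'a list \<Rightarrow> 'a list" where
  "seq2 E S = filter (\<lambda>v. N1 E S v = {}) S"

definition PS :: "('a \<Rightarrow> 'a \<Rightarrow> bool) \<Rightarrow> 'a list \<Rightarrow> 'a \<Rightarrow> 'a set" where
  "PS E S u = {v \<in> set (seq2 E S). N1 E S u \<inter> N2 E S v \<noteq> {}}"

text \<open>S_{u->v}: remove u and reinsert it immediately after v.\<close>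
definition move_after :: "'a list \<Rightarrow> 'a \<Rightarrow> 'a \<Rightarrow> 'a list" where
  "move_after S u v = (let T = removeAll u S; i = Suc (length (takeWhile (\<lambda>x. x \<noteq> v) T))
                       in take i T @ u # drop i T)"

end

theory Submission
  imports Defs
begin


lemma before_Nil[simp]: "before [] x = []" by (simp add: before_def)
lemma before_Cons[simp]: "before (y#ys) x = (if y = x then [] else y # before ys x)"
  by (simp add: before_def)
lemma before_append[simp]: "before (X@Y) x = (if x \<in> set X then before X x else X @ before Y x)"
  by (induction X) auto
lemma not_in_before: "x \<notin> set (before S x)"
  by (induction S) auto
lemma before_sub: "set (before S x) \<subseteq> set S"
  by (induction S) auto

lemma split_before: "x \<in> set S \<Longrightarrow> \<exists>B. S = before S x @ x # B"
  by (induction S) auto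

lemma total: "x \<in> set S \<Longrightarrow> y \<in> set S \<Longrightarrow> x \<noteq> y \<Longrightarrow> y \<notin> set (before S x)
   \<Longrightarrow> x \<in> set (before S y)"
  by (induction S) (auto split: if_splits)

lemma before_filter: "P v \<Longrightarrow> set (before (filter P S) v) \<subseteq> set (before S v)"
  by (induction S) auto

lemma take_before: "distinct S \<Longrightarrow> i < length S \<Longrightarrow> before S (S!i) = take i S"
  unfolding before_def
  by (rule takeWhile_eq_take_P_nth) (auto simp: nth_eq_iff_index_eq)

lemma card_idx: "distinct S \<Longrightarrow> i \<le> length S \<Longrightarrow>
   card {j. j < i \<and> P (S!j)} = card {x \<in> set (take i S). P x}"
proof -
  assume d: "distinct S" and i: "i \<le> length S"
  have "{x \<in> set (take i S). P x} = (nth S) ` {j. j < i \<and> P (S!j)}"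
    using i by (auto simp: in_set_conv_nth)
  moreover have "inj_on (nth S) {j. j < i \<and> P (S!j)}"
    using d i by (intro inj_on_nth) auto
  ultimately show ?thesis by (simp add: card_image)
qed

lemma dns_iff: "dns V E S \<longleftrightarrow> is_seq V S \<and>
  (\<forall>v\<in>set S. \<exists>w\<in>cnbhd E v. card {x \<in> set (before S v). w \<in> cnbhd E x} \<le> 1)"
proof
  assume a: "dns V E S"
  hence d: "distinct S" by (simp add: dns_def is_seq_def)
  show "is_seq V S \<and>
  (\<forall>v\<in>set S. \<exists>w\<in>cnbhd E v. card {x \<in> set (before S v). w \<in> cnbhd E x} \<le> 1)"
  proof (intro conjI ballI)
    show "is_seq V S" using a by (simp add: dns_def)
    fix v assume "v \<in> set S"
    then obtain i where i: "i < length S" "v = S!i" by (auto simp: in_set_conv_nth)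
    then obtain w where w: "w \<in> cnbhd E v" "card {j. j < i \<and> w \<in> cnbhd E (S ! j)} \<le> 1"
      using a by (auto simp: dns_def)
    have "card {x \<in> set (before S v). w \<in> cnbhd E x} = card {j. j < i \<and> w \<in> cnbhd E (S ! j)}"
      using card_idx[OF d, of i "\<lambda>x. w \<in> cnbhd E x"] take_before[OF d i(1)] i by simp
    hence "card {x \<in> set (before S v). w \<in> cnbhd E x} \<le> 1" using w(2) by linarith
    thus "\<exists>w\<in>cnbhd E v. card {x \<in> set (before S v). w \<in> cnbhd E x} \<le> 1"
      using w(1) by blast
  qed
next
  assume a: "is_seq V S \<and>
  (\<forall>v\<in>set S. \<exists>w\<in>cnbhd E v. card {x \<in> set (before S v). w \<in> cnbhd E x} \<le> 1)"
  hence d: "distinct S" by (simp add: is_seq_def)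
  show "dns V E S" unfolding dns_def
  proof (intro conjI allI impI)
    show "is_seq V S" using a by simp
    fix i assume i: "i < length S"
    then obtain w where w: "w \<in> cnbhd E (S!i)" "card {x \<in> set (before S (S!i)). w \<in> cnbhd E x} \<le> 1"
      using a i nth_mem[OF i] by blast
    have "card {x \<in> set (before S (S!i)). w \<in> cnbhd E x} = card {j. j < i \<and> w \<in> cnbhd E (S ! j)}"
      using card_idx[OF d, of i "\<lambda>x. w \<in> cnbhd E x"] take_before[OF d i] i by simp
    hence "card {j. j < i \<and> w \<in> cnbhd E (S ! j)} \<le> 1" using w(2) by linarith
    thus "\<exists>w\<in>cnbhd E (S ! i). card {j. j < i \<and> w \<in> cnbhd E (S ! j)} \<le> 1"
      using w(1) by blast
  qed
qed


lemma first_dom: "\<exists>y\<in>set S. Q y \<Longrightarrow> \<exists>z\<in>set S. Q z \<and> (\<forall>y\<in>set (before S z). \<not> Q y)"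
  by (induction S) auto


lemma N1_mono: "set (before S' v) \<subseteq> set (before S v) \<Longrightarrow> N1 E S v \<subseteq> N1 E S' v"
  unfolding N1_def by blast

lemma decomp:
  assumes "distinct S" "u \<in> set (before S vu)" "vu \<in> set S"
  shows "\<exists>A1 A2 B. S = A1 @ u # A2 @ vu # B \<and> move_after S u vu = A1 @ A2 @ vu # u # B"
proof -
  obtain B where B: "S = before S vu @ vu # B" using split_before[OF assms(3)] by (elim exE)
  obtain A1 A2 where A: "before S vu = A1 @ u # A2" using split_list[OF assms(2)] by (elim exE)
  have "S = (A1 @ u # A2) @ vu # B" using A B by (rule subst)
  hence S: "S = A1 @ u # A2 @ vu # B" by simp
  have "vu \<notin> set (before S vu)" by (rule not_in_before)
  hence nv: "vu \<notin> set A1" "vu \<notin> set A2" "vu \<noteq> u" unfolding A by auto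
  have nu: "u \<notin> set A1" "u \<notin> set A2" "u \<notin> set B" using assms(1) unfolding S by auto
  have T: "removeAll u S = A1 @ A2 @ vu # B" using nu nv unfolding S by simp
  have tw: "takeWhile (\<lambda>x. x \<noteq> vu) (A1 @ A2 @ vu # B) = A1 @ A2"
  proof -
    have "takeWhile (\<lambda>x. x \<noteq> vu) ((A1 @ A2) @ vu # B) = A1 @ A2"
      using nv by (subst takeWhile_append2) auto
    thus ?thesis by simp
  qed
  have "move_after S u vu = A1 @ A2 @ vu # u # B"
    unfolding move_after_def Let_def T tw by simp
  thus ?thesis using S by blast
qed


theorem lemma1:
  fixes V :: "'a set" and E :: "'a \<Rightarrow> 'a \<Rightarrow> bool" and S :: "'a list" and u vu :: 'a
  assumes "graph V E" and "no_isolated V E" and "dds V E S"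
    and "u \<in> set S" and "PS E S u \<noteq> {}" and "vu \<in> PS E S u"
  shows "dominating_seq V E (seq1 E S)
    \<and> (dds V E (move_after S u vu) \<and> set (move_after S u vu) = set S)
    \<and> (gdds V E S \<longrightarrow> gdds V E (move_after S u vu))
    \<and> {v \<in> PS E S u. pos S v \<le> pos S vu} \<union> (set (seq1 E S) - {u})
        \<subseteq> set (seq1 E (move_after S u vu))"
proof -
  have dS: "dns V E S" and cardS: "\<forall>w\<in>V. card (cnbhd E w \<inter> set S) \<ge> 2"
    using assms(3) by (auto simp: dds_def)
  have dist: "distinct S" and sub: "set S \<subseteq> V" using dS by (auto simp: dns_def is_seq_def)
  have gr: "\<And>x y. E x y \<Longrightarrow> x \<in> V \<and> y \<in> V" "\<And>x y. E x y \<Longrightarrow> E y x"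
    using assms(1) by (auto simp: graph_def)
  obtain w where vu2: "vu \<in> set (seq2 E S)" and wu: "w \<in> N1 E S u" and wv: "w \<in> N2 E S vu"
    using assms(6) by (auto simp: PS_def)
  have N1vu: "N1 E S vu = {}" using vu2 by (simp add: seq2_def)
  have vuS: "vu \<in> set S" using vu2 by (simp add: seq2_def)
  have vuu: "vu \<noteq> u" using N1vu wu by auto
  have wNvu: "w \<in> cnbhd E vu" using wv by (simp add: N2_def)
  have wNu: "w \<in> cnbhd E u" using wu by (simp add: N1_def)
  have "vu \<notin> set (before S u)" using wu wNvu by (auto simp: N1_def)
  hence uvu: "u \<in> set (before S vu)" using total[OF assms(4) vuS vuu[symmetric]] by blast
  obtain A1 A2 B where Sd: "S = A1 @ u # A2 @ vu # B" and S'd: "move_after S u vu = A1 @ A2 @ vu # u # B"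
    using decomp[OF dist uvu vuS] by blast
  define S' where "S' = move_after S u vu"
  have S'eq: "S' = A1 @ A2 @ vu # u # B" using S'd unfolding S'_def .
  have dd: "distinct (A1 @ u # A2 @ vu # B)" using dist Sd by simp
  have distS': "distinct S'" using dd unfolding S'eq by auto
  have setS': "set S' = set S" unfolding S'eq Sd by auto
  have lenS': "length S' = length S" unfolding S'eq Sd by auto
  have preS'u: "set (before S' u) = set (before S vu) - {u} \<union> {vu}"
    using dd unfolding S'eq Sd by auto
  have preS'y: "set (before S' y) \<subseteq> set (before S y)" if "y \<in> set S" "y \<noteq> u" for y
    using dd that unfolding S'eq Sd by (auto split: if_splits)
  have preS'y2: "u \<notin> set (before S' y)" if "y \<in> set A2 \<or> y = vu" for y
    using dd that before_sub[of A2 y] unfolding S'eq by (auto split: if_splits)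
  have cnt_u: "{x \<in> set (before S vu). w \<in> cnbhd E x} = {u}"
  proof -
    have "card {x \<in> set (before S vu). w \<in> cnbhd E x} = 1" using wv by (simp add: N2_def)
    then obtain z where z: "{x \<in> set (before S vu). w \<in> cnbhd E x} = {z}" by (auto simp: card_1_singleton_iff)
    have "u \<in> {x \<in> set (before S vu). w \<in> cnbhd E x}" using uvu wNu by simp
    thus ?thesis using z by auto
  qed
  have P1: "dominating_seq V E (seq1 E S)"
  proof -
    let ?L = "seq1 E S"
    have dL: "distinct ?L" using dist by (simp add: seq1_def)
    have legal: "legal_seq V E ?L"
      unfolding legal_seq_def is_seq_def
    proof (intro conjI allI impI)
      show "distinct ?L" by fact
      show "set ?L \<subseteq> V" using sub by (auto simp: seq1_def)
      fix i assume i: "1 \<le> i \<and> i < length ?L"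
      let ?v = "?L ! i"
      have "?v \<in> set ?L" using i by simp
      hence "N1 E S ?v \<noteq> {}" by (simp add: seq1_def)
      then obtain w' where w': "w' \<in> N1 E S ?v" by blast
      have "set (take i ?L) \<subseteq> set (before S ?v)"
        using take_before[OF dL, of i] i before_filter[of "\<lambda>v. N1 E S v \<noteq> {}" ?v S]
          \<open>N1 E S ?v \<noteq> {}\<close> by (simp add: seq1_def)
      moreover have "\<forall>j<i. ?L ! j \<in> set (take i ?L)"
      proof (intro allI impI)
        fix j assume j: "j < i"
        have "take i ?L ! j = ?L ! j" using j by simp
        moreover have "j < length (take i ?L)" using j i by simp
        ultimately show "?L ! j \<in> set (take i ?L)" by (metis nth_mem)
      qed
      ultimately have "\<forall>j<i. ?L ! j \<in> set (before S ?v)" by blast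
      hence "w' \<in> cnbhd E ?v - (\<Union>j<i. cnbhd E (?L ! j))" using w' by (auto simp: N1_def)
      thus "cnbhd E ?v - (\<Union>j<i. cnbhd E (?L ! j)) \<noteq> {}" by blast
    qed
    have "(\<Union>v\<in>set ?L. cnbhd E v) = V"
    proof
      show "(\<Union>v\<in>set ?L. cnbhd E v) \<subseteq> V"
        using sub gr by (auto simp: seq1_def cnbhd_def)
      show "V \<subseteq> (\<Union>v\<in>set ?L. cnbhd E v)"
      proof
        fix x assume x: "x \<in> V"
        hence "card (cnbhd E x \<inter> set S) \<ge> 2" using cardS by blast
        hence "cnbhd E x \<inter> set S \<noteq> {}" by (cases "cnbhd E x \<inter> set S = {}") auto
        then obtain y where "y \<in> set S" "y \<in> cnbhd E x" by blast
        hence "\<exists>y\<in>set S. x \<in> cnbhd E y" using gr(2)[of x y] unfolding cnbhd_def by blast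
        then obtain z where z: "z \<in> set S" "x \<in> cnbhd E z" "\<forall>y\<in>set (before S z). x \<notin> cnbhd E y"
          using first_dom[of S "\<lambda>y. x \<in> cnbhd E y"] by blast
        hence "x \<in> N1 E S z" by (auto simp: N1_def)
        hence "z \<in> set ?L" using z by (auto simp: seq1_def)
        thus "x \<in> (\<Union>v\<in>set ?L. cnbhd E v)" using z by blast
      qed
    qed
    thus ?thesis using legal by (simp add: dominating_seq_def)
  qed
  have P2: "dds V E S'"
  proof -
    have "dns V E S'" unfolding dns_iff
    proof (intro conjI ballI)
      show "is_seq V S'" using distS' setS' sub by (simp add: is_seq_def)
      fix y assume y: "y \<in> set S'"
      show "\<exists>w\<in>cnbhd E y. card {x \<in> set (before S' y). w \<in> cnbhd E x} \<le> 1"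
      proof (cases "y = u")
        case True
        have "{x \<in> set (before S' y). w \<in> cnbhd E x} \<subseteq> {vu}"
          using preS'u cnt_u True by blast
        hence "card {x \<in> set (before S' y). w \<in> cnbhd E x} \<le> card {vu}"
          by (intro card_mono) simp_all
        hence "card {x \<in> set (before S' y). w \<in> cnbhd E x} \<le> 1" by simp
        thus ?thesis using True wNu by blast
      next
        case False
        have yS: "y \<in> set S" using y setS' by simp
        then obtain w' where w': "w' \<in> cnbhd E y" "card {x \<in> set (before S y). w' \<in> cnbhd E x} \<le> 1"
          using dS unfolding dns_iff by blast
        have "card {x \<in> set (before S' y). w' \<in> cnbhd E x} \<le> card {x \<in> set (before S y). w' \<in> cnbhd E x}"
          by (rule card_mono) (use preS'y[OF yS False] in auto)
        hence "card {x \<in> set (before S' y). w' \<in> cnbhd E x} \<le> 1" using w'(2) by linarith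
        thus ?thesis using w'(1) by blast
      qed
    qed
    thus ?thesis using cardS setS' by (simp add: dds_def)
  qed
  have P3: "gdds V E S \<longrightarrow> gdds V E S'"
    using P2 lenS' by (simp add: gdds_def)
  have P4: "{v \<in> PS E S u. pos S v \<le> pos S vu} \<union> (set (seq1 E S) - {u}) \<subseteq> set (seq1 E S')"
  proof
    fix v assume "v \<in> {v \<in> PS E S u. pos S v \<le> pos S vu} \<union> (set (seq1 E S) - {u})"
    then consider (a) "v \<in> PS E S u" "pos S v \<le> pos S vu" | (b) "v \<in> set (seq1 E S)" "v \<noteq> u" by blast
    then show "v \<in> set (seq1 E S')"
    proof cases
      case a
      obtain w2 where v2: "v \<in> set (seq2 E S)" and w2u: "w2 \<in> N1 E S u" and w2v: "w2 \<in> N2 E S v"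
        using a(1) by (auto simp: PS_def)
      have vS: "v \<in> set S" using v2 by (simp add: seq2_def)
      have vu': "v \<noteq> u" using v2 w2u by (auto simp: seq2_def)
      have w2Nv: "w2 \<in> cnbhd E v" using w2v by (simp add: N2_def)
      have bu: "before S u = A1" using dd unfolding Sd by simp
      have "v \<notin> set A1" using w2u w2Nv bu by (auto simp: N1_def)
      moreover have "v \<notin> set B"
      proof
        assume vB: "v \<in> set B"
        have "before S v = A1 @ u # A2 @ vu # before B v" using dd vB unfolding Sd by auto
        moreover have "before S vu = A1 @ u # A2" using dd unfolding Sd by auto
        ultimately show False using a(2) by (simp add: pos_def)
      qed
      ultimately have vA: "v \<in> set A2 \<or> v = vu" using vS vu' unfolding Sd by auto
      have uv: "u \<in> set (before S v)" using vA dd unfolding Sd by (auto split: if_splits)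
      have "{x \<in> set (before S v). w2 \<in> cnbhd E x} = {u}"
      proof -
        have "card {x \<in> set (before S v). w2 \<in> cnbhd E x} = 1" using w2v by (simp add: N2_def)
        then obtain z where z: "{x \<in> set (before S v). w2 \<in> cnbhd E x} = {z}" by (auto simp: card_1_singleton_iff)
        have "u \<in> {x \<in> set (before S v). w2 \<in> cnbhd E x}" using uv w2u by (simp add: N1_def)
        thus ?thesis using z by auto
      qed
      hence "w2 \<in> N1 E S' v" using preS'y[OF vS vu'] preS'y2[OF vA] w2Nv by (auto simp: N1_def)
      thus ?thesis using vS setS' by (auto simp: seq1_def)
    next
      case b
      have vS: "v \<in> set S" and "N1 E S v \<noteq> {}" using b(1) by (auto simp: seq1_def)
      hence "N1 E S' v \<noteq> {}" using N1_mono[OF preS'y[OF vS b(2)], of E] by blast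
      thus ?thesis using vS setS' by (auto simp: seq1_def)
    qed
  qed
  show ?thesis using P1 P2 P3 P4 setS' unfolding S'_def by blast
qed

end
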